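(* Let $P_n(x)$ be a real polynomial all of whose roots are real, with distinct roots $p_1<\dots<p_m$ of multiplicities $r_1,\dots,r_m$. Then $$Z=\sum_{1\le i<j\le m}\frac{r_j^{-1}-r_i^{-1}}{p_j-p_i}$$ is a rational function of the coefficients of $P_n(x)$. *)

theory Defs
  imports Complex_Main "HOL-Computational_Algebra.Polynomial" "HOL-Library.Multiset"
begin

definition poly_fun :: "nat \<Rightarrow> ((nat \<Rightarrow> real) \<Rightarrow> real) \<Rightarrow> bool" where
  "poly_fun N f \<longleftrightarrow>
     (\<exists>(E :: (nat \<Rightarrow> nat) set) (c :: (nat \<Rightarrow> nat) \<Rightarrow> real).
        finite E \<and> (\<forall>a. f a = (\<Sum>\<alpha>\<in>E. c \<alpha> * (\<Prod>i<N. a i ^ \<alpha> i))))"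

definition real_rooted :: "real poly \<Rightarrow> bool" where
  "real_rooted P \<longleftrightarrow> (\<forall>z::complex. poly (map_poly of_real P) z = 0 \<longrightarrow> z \<in> \<real>)"

definition root_set :: "real poly \<Rightarrow> real set" where
  "root_set P = {x. poly P x = 0}"

definition mult_pattern :: "real poly \<Rightarrow> nat multiset" where
  "mult_pattern P = image_mset (\<lambda>x. order x P) (mset_set (root_set P))"

definition Zsum :: "real poly \<Rightarrow> real" where
  "Zsum P = (\<Sum>p\<in>root_set P. \<Sum>q\<in>root_set P.
      if p < q then (1 / real (order q P) - 1 / real (order p P)) / (q - p) else 0)"

end

theory Submission
  imports Defs "Jordan_Normal_Form.Determinant" "HOL-Computational_Algebra.Fundamental_Theorem_Algebra"
begin


lemma poly_fun_gen:
  assumes "finite X" "\<And>a. f a = (\<Sum>x\<in>X. w x * (\<Prod>i<N. a i ^ e x i))"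
  shows "poly_fun N f"
proof -
  have "\<forall>a. f a = (\<Sum>\<gamma>\<in>e ` X. (\<Sum>x\<in>{x\<in>X. e x = \<gamma>}. w x) * (\<Prod>i<N. a i ^ \<gamma> i))"
  proof
    fix a
    have "(\<Sum>\<gamma>\<in>e ` X. (\<Sum>x\<in>{x\<in>X. e x = \<gamma>}. w x) * (\<Prod>i<N. a i ^ \<gamma> i))
        = (\<Sum>\<gamma>\<in>e ` X. (\<Sum>x\<in>{x\<in>X. e x = \<gamma>}. w x * (\<Prod>i<N. a i ^ \<gamma> i)))"
      by (simp only: sum_distrib_right)
    also have "\<dots> = (\<Sum>\<gamma>\<in>e ` X. (\<Sum>x\<in>{x\<in>X. e x = \<gamma>}. w x * (\<Prod>i<N. a i ^ e x i)))"
      by (intro sum.cong refl) simp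
    also have "\<dots> = (\<Sum>x\<in>X. w x * (\<Prod>i<N. a i ^ e x i))"
      by (rule sum.image_gen[symmetric, OF assms(1)])
    finally show "f a = (\<Sum>\<gamma>\<in>e ` X. (\<Sum>x\<in>{x\<in>X. e x = \<gamma>}. w x) * (\<Prod>i<N. a i ^ \<gamma> i))"
      using assms(2) by simp
  qed
  moreover have "finite (e ` X)" using assms(1) by simp
  ultimately show ?thesis unfolding poly_fun_def
    by (intro exI[of _ "e ` X"] exI[of _ "\<lambda>\<gamma>. \<Sum>x\<in>{x\<in>X. e x = \<gamma>}. w x"]) simp
qed

lemma poly_fun_const: "poly_fun N (\<lambda>a. c)"
  by (rule poly_fun_gen[where X="{()}" and w="\<lambda>_. c" and e="\<lambda>_ _. 0"]) auto

lemma poly_fun_var: assumes "i < N" shows "poly_fun N (\<lambda>a. a i)"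
proof (rule poly_fun_gen[where X="{()}" and w="\<lambda>_. 1" and e="\<lambda>_ j. if j = i then 1 else 0"])
  fix a :: "nat \<Rightarrow> real"
  have "(\<Prod>j<N. a j ^ (if j = i then 1 else 0)) = (\<Prod>j<N. if j = i then a j else 1)"
    by (intro prod.cong) auto
  also have "\<dots> = a i" using assms by (simp add: prod.delta)
  finally show "a i = (\<Sum>x\<in>{()}. 1 * (\<Prod>j<N. a j ^ (if j = i then 1 else 0)))" by simp
qed auto

lemma poly_fun_add: assumes "poly_fun N f" "poly_fun N g" shows "poly_fun N (\<lambda>a. f a + g a)"
proof -
  obtain E1 c1 where 1: "finite E1" "\<forall>a. f a = (\<Sum>\<alpha>\<in>E1. c1 \<alpha> * (\<Prod>i<N. a i ^ \<alpha> i))"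
    using assms(1) unfolding poly_fun_def by blast
  obtain E2 c2 where 2: "finite E2" "\<forall>a. g a = (\<Sum>\<alpha>\<in>E2. c2 \<alpha> * (\<Prod>i<N. a i ^ \<alpha> i))"
    using assms(2) unfolding poly_fun_def by blast
  show ?thesis
    by (rule poly_fun_gen[where X="E1 <+> E2" and w="case_sum c1 c2" and e="case_sum id id"])
      (use 1 2 in \<open>auto simp: sum.Plus o_def\<close>)
qed

lemma poly_fun_mult: assumes "poly_fun N f" "poly_fun N g" shows "poly_fun N (\<lambda>a. f a * g a)"
proof -
  obtain E1 c1 where 1: "finite E1" "\<forall>a. f a = (\<Sum>\<alpha>\<in>E1. c1 \<alpha> * (\<Prod>i<N. a i ^ \<alpha> i))"
    using assms(1) unfolding poly_fun_def by blast
  obtain E2 c2 where 2: "finite E2" "\<forall>a. g a = (\<Sum>\<alpha>\<in>E2. c2 \<alpha> * (\<Prod>i<N. a i ^ \<alpha> i))"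
    using assms(2) unfolding poly_fun_def by blast
  show ?thesis
  proof (rule poly_fun_gen[where X="E1 \<times> E2" and w="\<lambda>(\<alpha>,\<beta>). c1 \<alpha> * c2 \<beta>" and e="\<lambda>(\<alpha>,\<beta>) i. \<alpha> i + \<beta> i"])
    fix a
    have "f a * g a = (\<Sum>\<alpha>\<in>E1. \<Sum>\<beta>\<in>E2. (c1 \<alpha> * (\<Prod>i<N. a i ^ \<alpha> i)) * (c2 \<beta> * (\<Prod>i<N. a i ^ \<beta> i)))"
      using 1 2 by (simp add: sum_product)
    also have "\<dots> = (\<Sum>(\<alpha>,\<beta>)\<in>E1\<times>E2. (c1 \<alpha> * c2 \<beta>) * (\<Prod>i<N. a i ^ (\<alpha> i + \<beta> i)))"
      by (subst sum.cartesian_product) (auto intro!: sum.cong simp: power_add prod.distrib mult_ac)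
    finally show "f a * g a = (\<Sum>x\<in>E1 \<times> E2. (case x of (\<alpha>, \<beta>) \<Rightarrow> c1 \<alpha> * c2 \<beta>) * (\<Prod>i<N. a i ^ (case x of (\<alpha>, \<beta>) \<Rightarrow> \<lambda>i. \<alpha> i + \<beta> i) i))"
      by (simp add: case_prod_unfold)
  qed (use 1 2 in auto)
qed

definition good :: "nat \<Rightarrow> real poly set \<Rightarrow> (real poly \<Rightarrow> real) \<Rightarrow> bool" where
  "good N S g \<longleftrightarrow> (\<exists>A B. poly_fun N A \<and> poly_fun N B \<and>
      (\<forall>P\<in>S. B (coeff P) \<noteq> 0 \<and> g P = A (coeff P) / B (coeff P)))"

lemma good_const: "good N S (\<lambda>P. c)"
  unfolding good_def by (rule exI[of _ "\<lambda>a. c"], rule exI[of _ "\<lambda>a. 1"]) (auto intro: poly_fun_const)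

lemma good_coeff: "i < N \<Longrightarrow> good N S (\<lambda>P. coeff P i)"
  unfolding good_def by (rule exI[of _ "\<lambda>a. a i"], rule exI[of _ "\<lambda>a. 1"]) (auto intro: poly_fun_const poly_fun_var)

lemma good_cong: "good N S f \<Longrightarrow> (\<And>P. P \<in> S \<Longrightarrow> f P = g P) \<Longrightarrow> good N S g"
  unfolding good_def by metis

lemma good_add: assumes "good N S f" "good N S g" shows "good N S (\<lambda>P. f P + g P)"
proof -
  obtain A1 B1 where 1: "poly_fun N A1" "poly_fun N B1" "\<forall>P\<in>S. B1 (coeff P) \<noteq> 0 \<and> f P = A1 (coeff P) / B1 (coeff P)"
    using assms(1) unfolding good_def by blast
  obtain A2 B2 where 2: "poly_fun N A2" "poly_fun N B2" "\<forall>P\<in>S. B2 (coeff P) \<noteq> 0 \<and> g P = A2 (coeff P) / B2 (coeff P)"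
    using assms(2) unfolding good_def by blast
  show ?thesis unfolding good_def
    by (rule exI[of _ "\<lambda>a. A1 a * B2 a + A2 a * B1 a"], rule exI[of _ "\<lambda>a. B1 a * B2 a"])
      (use 1 2 in \<open>auto intro!: poly_fun_add poly_fun_mult simp: field_simps\<close>)
qed

lemma good_mult: assumes "good N S f" "good N S g" shows "good N S (\<lambda>P. f P * g P)"
proof -
  obtain A1 B1 where 1: "poly_fun N A1" "poly_fun N B1" "\<forall>P\<in>S. B1 (coeff P) \<noteq> 0 \<and> f P = A1 (coeff P) / B1 (coeff P)"
    using assms(1) unfolding good_def by blast
  obtain A2 B2 where 2: "poly_fun N A2" "poly_fun N B2" "\<forall>P\<in>S. B2 (coeff P) \<noteq> 0 \<and> g P = A2 (coeff P) / B2 (coeff P)"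
    using assms(2) unfolding good_def by blast
  show ?thesis unfolding good_def
    by (rule exI[of _ "\<lambda>a. A1 a * A2 a"], rule exI[of _ "\<lambda>a. B1 a * B2 a"])
      (use 1 2 in \<open>auto intro!: poly_fun_add poly_fun_mult simp: field_simps\<close>)
qed

lemma good_divide: assumes "good N S f" "good N S g" "\<And>P. P \<in> S \<Longrightarrow> g P \<noteq> 0"
  shows "good N S (\<lambda>P. f P / g P)"
proof -
  obtain A1 B1 where 1: "poly_fun N A1" "poly_fun N B1" "\<forall>P\<in>S. B1 (coeff P) \<noteq> 0 \<and> f P = A1 (coeff P) / B1 (coeff P)"
    using assms(1) unfolding good_def by blast
  obtain A2 B2 where 2: "poly_fun N A2" "poly_fun N B2" "\<forall>P\<in>S. B2 (coeff P) \<noteq> 0 \<and> g P = A2 (coeff P) / B2 (coeff P)"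
    using assms(2) unfolding good_def by blast
  have 3: "A2 (coeff P) \<noteq> 0" if "P \<in> S" for P using 2 assms(3)[OF that] that by auto
  show ?thesis unfolding good_def
    by (rule exI[of _ "\<lambda>a. A1 a * B2 a"], rule exI[of _ "\<lambda>a. B1 a * A2 a"])
      (use 1 2 3 in \<open>auto intro!: poly_fun_add poly_fun_mult simp: field_simps\<close>)
qed

lemma good_minus: "good N S f \<Longrightarrow> good N S (\<lambda>P. - f P)"
  using good_mult[OF good_const[of N S "-1"], of f] by simp

lemma good_diff: "good N S f \<Longrightarrow> good N S g \<Longrightarrow> good N S (\<lambda>P. f P - g P)"
  using good_add[of N S f "\<lambda>P. - g P"] good_minus[of N S g] by simp

lemma good_sum: "finite I \<Longrightarrow> (\<And>i. i \<in> I \<Longrightarrow> good N S (f i)) \<Longrightarrow> good N S (\<lambda>P. \<Sum>i\<in>I. f i P)"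
  by (induction I rule: finite_induct) (auto intro: good_const good_add)

lemma good_prod: "finite I \<Longrightarrow> (\<And>i. i \<in> I \<Longrightarrow> good N S (f i)) \<Longrightarrow> good N S (\<lambda>P. \<Prod>i\<in>I. f i P)"
  by (induction I rule: finite_induct) (auto intro: good_const good_mult)


definition gmat :: "nat \<Rightarrow> real poly set \<Rightarrow> nat \<Rightarrow> (real poly \<Rightarrow> real mat) \<Rightarrow> bool" where
  "gmat N S k M \<longleftrightarrow> (\<forall>P\<in>S. M P \<in> carrier_mat k k) \<and> (\<forall>i<k. \<forall>j<k. good N S (\<lambda>P. M P $$ (i,j)))"

lemma gmat_mat: assumes H: "\<And>i j. i < k \<Longrightarrow> j < k \<Longrightarrow> good N S (\<lambda>P. f P i j)"
  shows "gmat N S k (\<lambda>P. mat k k (\<lambda>(i,j). f P i j))"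
  unfolding gmat_def
proof (intro conjI ballI allI impI)
  fix i j assume "i < k" "j < k"
  show "good N S (\<lambda>P. mat k k (\<lambda>(i,j). f P i j) $$ (i, j))"
    by (rule good_cong[OF H[OF \<open>i < k\<close> \<open>j < k\<close>]]) (use \<open>i < k\<close> \<open>j < k\<close> in simp)
qed simp

lemma gmat_entry: "gmat N S k M \<Longrightarrow> i < k \<Longrightarrow> j < k \<Longrightarrow> good N S (\<lambda>P. M P $$ (i,j))"
  unfolding gmat_def by auto

lemma gmat_carrier: "gmat N S k M \<Longrightarrow> P \<in> S \<Longrightarrow> M P \<in> carrier_mat k k"
  unfolding gmat_def by auto

lemma good_det: assumes "gmat N S k M" shows "good N S (\<lambda>P. det (M P))"
proof -
  have "good N S (\<lambda>P. \<Sum>p\<in>{p. p permutes {0..<k}}. signof p * (\<Prod>i = 0..<k. M P $$ (i, p i)))"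
  proof (intro good_sum good_mult good_const good_prod)
    show "finite {p. p permutes {0..<k}}" by (simp add: finite_permutations)
    fix p i assume "p \<in> {p. p permutes {0..<k}}" "i \<in> {0..<k}"
    then have "p i < k" by (auto dest: permutes_in_image)
    then show "good N S (\<lambda>P. M P $$ (i, p i))" using gmat_entry[OF assms] \<open>i \<in> {0..<k}\<close> by auto
  qed auto
  then show ?thesis
  proof (rule good_cong)
    fix P assume "P \<in> S"
    show "(\<Sum>p\<in>{p. p permutes {0..<k}}. signof p * (\<Prod>i = 0..<k. M P $$ (i, p i))) = det (M P)"
      using det_def'[OF gmat_carrier[OF assms \<open>P \<in> S\<close>]] by simp
  qed
qed

lemma gmat_mult: assumes "gmat N S k A" "gmat N S k B" shows "gmat N S k (\<lambda>P. A P * B P)"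
  unfolding gmat_def
proof (intro conjI ballI allI impI)
  fix P assume "P \<in> S" then show "A P * B P \<in> carrier_mat k k"
    using gmat_carrier[OF assms(1)] gmat_carrier[OF assms(2)] by (meson mult_carrier_mat)
next
  fix i j assume ij: "i < k" "j < k"
  have "good N S (\<lambda>P. \<Sum>l\<in>{0..<k}. A P $$ (i,l) * B P $$ (l,j))"
    by (intro good_sum good_mult) (use ij gmat_entry[OF assms(1)] gmat_entry[OF assms(2)] in auto)
  then show "good N S (\<lambda>P. (A P * B P) $$ (i, j))"
  proof (rule good_cong)
    fix P assume P: "P \<in> S"
    have c: "A P \<in> carrier_mat k k" "B P \<in> carrier_mat k k"
      using gmat_carrier[OF assms(1) P] gmat_carrier[OF assms(2) P] by auto
    show "(\<Sum>l\<in>{0..<k}. A P $$ (i,l) * B P $$ (l,j)) = (A P * B P) $$ (i, j)"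
      using c ij by (simp add: scalar_prod_def)
  qed
qed

lemma gmat_cong: assumes "gmat N S k M" "\<And>P. P \<in> S \<Longrightarrow> M P = M' P" shows "gmat N S k M'"
  unfolding gmat_def
proof (intro conjI ballI allI impI)
  fix P assume "P \<in> S" then show "M' P \<in> carrier_mat k k" using gmat_carrier[OF assms(1)] assms(2) by metis
next
  fix i j assume "i < k" "j < k"
  show "good N S (\<lambda>P. M' P $$ (i, j))"
    by (rule good_cong[OF gmat_entry[OF assms(1) \<open>i < k\<close> \<open>j < k\<close>]]) (simp add: assms(2))
qed

lemma gmat_one: "gmat N S k (\<lambda>P. 1\<^sub>m k)"
  unfolding gmat_def
proof (intro conjI ballI allI impI)
  fix i j assume "i < k" "j < k"
  show "good N S (\<lambda>P. 1\<^sub>m k $$ (i, j))"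
    by (rule good_cong[OF good_const[of N S "if i = j then 1 else 0"]]) (use \<open>i < k\<close> \<open>j < k\<close> in simp)
qed simp

lemma gmat_pow: assumes "gmat N S k A" shows "gmat N S k (\<lambda>P. A P ^\<^sub>m e)"
proof (induction e)
  case 0
  show ?case by (rule gmat_cong[OF gmat_one]) (use gmat_carrier[OF assms] in auto)
next
  case (Suc e)
  show ?case using gmat_mult[OF Suc assms] by simp
qed

lemma gmat_delete: assumes "gmat N S (Suc k) A" "i < Suc k" "j < Suc k"
  shows "gmat N S k (\<lambda>P. mat_delete (A P) i j)"
  unfolding gmat_def
proof (intro conjI ballI allI impI)
  fix P assume "P \<in> S"
  then have "A P \<in> carrier_mat (Suc k) (Suc k)" using gmat_carrier[OF assms(1)] by blast
  from mat_delete_carrier[OF this, of i j] show "mat_delete (A P) i j \<in> carrier_mat k k" by simp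
next
  fix i' j' assume ij: "i' < k" "j' < k"
  have "good N S (\<lambda>P. A P $$ (if i' < i then i' else Suc i', if j' < j then j' else Suc j'))"
    by (rule gmat_entry[OF assms(1)]) (use ij in auto)
  then show "good N S (\<lambda>P. mat_delete (A P) i j $$ (i', j'))"
  proof (rule good_cong)
    fix P assume P: "P \<in> S"
    have c: "A P \<in> carrier_mat (Suc k) (Suc k)" using gmat_carrier[OF assms(1) P] .
    show "A P $$ (if i' < i then i' else Suc i', if j' < j then j' else Suc j') = mat_delete (A P) i j $$ (i', j')"
      unfolding mat_delete_def using c ij by simp
  qed
qed

lemma gmat_adj: assumes "gmat N S k A" shows "gmat N S k (\<lambda>P. adj_mat (A P))"
  unfolding gmat_def
proof (intro conjI ballI allI impI)
  fix P assume "P \<in> S" then show "adj_mat (A P) \<in> carrier_mat k k"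
    using gmat_carrier[OF assms(1)] adj_mat(1) by blast
next
  fix i j assume ij: "i < k" "j < k"
  then obtain k' where k: "k = Suc k'" by (cases k) auto
  have g1: "gmat N S (Suc k') A" using assms k by simp
  have "good N S (\<lambda>P. (-1)^(j+i) * det (mat_delete (A P) j i))"
  proof (intro good_mult good_const)
    show "good N S (\<lambda>P. det (mat_delete (A P) j i))"
      by (rule good_det[OF gmat_delete[OF g1]]) (use ij k in auto)
  qed
  then show "good N S (\<lambda>P. adj_mat (A P) $$ (i, j))"
  proof (rule good_cong)
    fix P assume P: "P \<in> S"
    have c: "A P \<in> carrier_mat k k" using gmat_carrier[OF assms(1) P] .
    show "(-1)^(j+i) * det (mat_delete (A P) j i) = adj_mat (A P) $$ (i, j)"
      unfolding adj_mat_def cofactor_def using c ij by simp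
  qed
qed

definition mtrace :: "real mat \<Rightarrow> real" where "mtrace A = (\<Sum>i<dim_row A. A $$ (i,i))"

lemma good_trace: assumes "gmat N S k A" shows "good N S (\<lambda>P. mtrace (A P))"
proof -
  have "good N S (\<lambda>P. \<Sum>i<k. A P $$ (i,i))"
    by (intro good_sum) (use gmat_entry[OF assms] in auto)
  then show ?thesis
  proof (rule good_cong)
    fix P assume P: "P \<in> S"
    have c: "A P \<in> carrier_mat k k" using gmat_carrier[OF assms(1) P] .
    then show "(\<Sum>i<k. A P $$ (i,i)) = mtrace (A P)" unfolding mtrace_def by simp
  qed
qed

lemma mtrace_comm: assumes "A \<in> carrier_mat k k" "B \<in> carrier_mat k k"
  shows "mtrace (A * B) = mtrace (B * A)"
proof -
  have "mtrace (A * B) = (\<Sum>i<k. \<Sum>l\<in>{0..<k}. A $$ (i,l) * B $$ (l,i))"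
    unfolding mtrace_def
  proof (rule sum.cong)
    fix i assume "i \<in> {..<k}"
    then show "(A * B) $$ (i, i) = (\<Sum>l\<in>{0..<k}. A $$ (i,l) * B $$ (l,i))"
      using assms by (simp add: scalar_prod_def)
  qed (use assms in simp)
  also have "\<dots> = (\<Sum>l\<in>{0..<k}. \<Sum>i<k. B $$ (l,i) * A $$ (i,l))"
    by (subst sum.swap) (simp add: mult.commute)
  also have "\<dots> = (\<Sum>l<k. \<Sum>i\<in>{0..<k}. B $$ (l,i) * A $$ (i,l))"
    by (simp add: atLeast0LessThan)
  also have "\<dots> = mtrace (B * A)"
    unfolding mtrace_def
  proof (rule sum.cong)
    fix i assume "i \<in> {..<dim_row (B * A)}"
    then have "i < k" using assms by simp
    then show "(\<Sum>l\<in>{0..<k}. B $$ (i,l) * A $$ (l,i)) = (B * A) $$ (i, i)"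
      using assms by (simp add: scalar_prod_def)
  qed (use assms in simp)
  finally show ?thesis .
qed

lemma gmat_replace_col: assumes "gmat N S k A" "\<And>i. i < k \<Longrightarrow> good N S (\<lambda>P. b P i)" "c < k"
  shows "gmat N S k (\<lambda>P. replace_col (A P) (vec k (b P)) c)"
  unfolding gmat_def
proof (intro conjI ballI allI impI)
  fix P assume "P \<in> S"
  then have cc: "A P \<in> carrier_mat k k" using gmat_carrier[OF assms(1)] by blast
  then show "replace_col (A P) (vec k (b P)) c \<in> carrier_mat k k"
    unfolding replace_col_def carrier_mat_def by simp
next
  fix i j assume ij: "i < k" "j < k"
  have "good N S (\<lambda>P. if j = c then b P i else A P $$ (i,j))"
  proof (cases "j = c")
    case True then show ?thesis using assms(2)[OF ij(1)] by simp
  next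
    case False then show ?thesis using gmat_entry[OF assms(1) ij] by simp
  qed
  then show "good N S (\<lambda>P. replace_col (A P) (vec k (b P)) c $$ (i, j))"
  proof (rule good_cong)
    fix P assume P: "P \<in> S"
    have cc: "A P \<in> carrier_mat k k" using gmat_carrier[OF assms(1) P] .
    show "(if j = c then b P i else A P $$ (i,j)) = replace_col (A P) (vec k (b P)) c $$ (i, j)"
      unfolding replace_col_def using cc ij by simp
  qed
qed


lemma mult_entry: "A \<in> carrier_mat k k \<Longrightarrow> B \<in> carrier_mat k k \<Longrightarrow> i < k \<Longrightarrow> j < k \<Longrightarrow>
  (A * B) $$ (i,j) = (\<Sum>l<k. A $$ (i,l) * B $$ (l,j))"
  by (simp add: scalar_prod_def atLeast0LessThan)

lemma mult_vec_entry: "A \<in> carrier_mat k k \<Longrightarrow> v \<in> carrier_vec k \<Longrightarrow> i < k \<Longrightarrow>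
  (A *\<^sub>v v) $ i = (\<Sum>l<k. A $$ (i,l) * v $ l)"
  by (simp add: scalar_prod_def atLeast0LessThan)

lemma det_nonzero_inj:
  fixes A :: "real mat"
  assumes A: "A \<in> carrier_mat k k" and inj: "\<And>v. v \<in> carrier_vec k \<Longrightarrow> A *\<^sub>v v = 0\<^sub>v k \<Longrightarrow> v = 0\<^sub>v k"
  shows "det A \<noteq> 0"
  using det_0_iff_vec_prod_zero[OF A] inj by blast

lemma cramer_solve:
  fixes A :: "real mat"
  assumes A: "A \<in> carrier_mat k k" and d: "det A \<noteq> 0" and b: "b \<in> carrier_vec k"
  shows "\<exists>x. x \<in> carrier_vec k \<and> A *\<^sub>v x = b \<and> (\<forall>c<k. x $ c = det (replace_col A b c) / det A)"
proof -
  define x where "x = (1 / det A) \<cdot>\<^sub>v (adj_mat A *\<^sub>v b)"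
  have adj: "adj_mat A \<in> carrier_mat k k" "A * adj_mat A = det A \<cdot>\<^sub>m 1\<^sub>m k" using adj_mat[OF A] by auto
  have xc: "x \<in> carrier_vec k" unfolding x_def using adj b by simp
  have "A *\<^sub>v x = (1 / det A) \<cdot>\<^sub>v (A *\<^sub>v (adj_mat A *\<^sub>v b))"
    unfolding x_def using A adj b by (simp add: mult_mat_vec)
  also have "A *\<^sub>v (adj_mat A *\<^sub>v b) = (A * adj_mat A) *\<^sub>v b"
    using A adj(1) b by simp
  also have "\<dots> = det A \<cdot>\<^sub>v b" unfolding adj(2)
  proof (rule eq_vecI)
    fix i assume "i < dim_vec (det A \<cdot>\<^sub>v b)"
    then have i: "i < k" using b by simp
    have "((det A \<cdot>\<^sub>m 1\<^sub>m k) *\<^sub>v b) $ i = (\<Sum>l<k. (det A \<cdot>\<^sub>m 1\<^sub>m k) $$ (i,l) * b $ l)"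
      by (rule mult_vec_entry) (use b i in auto)
    also have "\<dots> = (\<Sum>l<k. if l = i then det A * b $ i else 0)" by (rule sum.cong) (use i in auto)
    also have "\<dots> = det A * b $ i" using i by simp
    finally show "((det A \<cdot>\<^sub>m 1\<^sub>m k) *\<^sub>v b) $ i = (det A \<cdot>\<^sub>v b) $ i" using i b by simp
  qed (use b in simp)
  finally have Ax: "A *\<^sub>v x = b" using d b by (simp add: smult_smult_assoc)
  have "x $ c = det (replace_col A b c) / det A" if "c < k" for c
    using cramer_lemma_mat[OF A xc that] Ax d by simp
  with xc Ax show ?thesis by blast
qed

definition compan :: "real poly \<Rightarrow> nat \<Rightarrow> real mat" where
  "compan Q m = mat m m (\<lambda>(i,l). if l + 1 < m then (if i = l + 1 then 1 else 0) else - coeff Q i)"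

definition multm :: "real poly \<Rightarrow> nat \<Rightarrow> real poly \<Rightarrow> nat \<Rightarrow> real mat" where
  "multm Q m h K = mat m m (\<lambda>(i,l). \<Sum>e\<le>K. coeff h e * (compan Q m ^\<^sub>m e) $$ (i,l))"

definition vand :: "(nat \<Rightarrow> real) \<Rightarrow> nat \<Rightarrow> real mat" where
  "vand p m = mat m m (\<lambda>(j,l). p j ^ l)"

lemma compan_carrier[simp]: "compan Q m \<in> carrier_mat m m" by (simp add: compan_def)
lemma multm_carrier[simp]: "multm Q m h K \<in> carrier_mat m m" by (simp add: multm_def)
lemma vand_carrier[simp]: "vand p m \<in> carrier_mat m m" by (simp add: vand_def)

lemma vand_compan:
  assumes "coeff Q m = 1" "degree Q = m" "poly Q y = 0" "l < m"
  shows "(\<Sum>i<m. y ^ i * compan Q m $$ (i,l)) = y ^ (l + 1)"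
proof (cases "l + 1 < m")
  case True
  have "(\<Sum>i<m. y ^ i * compan Q m $$ (i,l)) = (\<Sum>i<m. if i = l + 1 then y ^ i else 0)"
    by (rule sum.cong) (use True assms in \<open>auto simp: compan_def\<close>)
  also have "\<dots> = y ^ (l+1)" using True by simp
  finally show ?thesis .
next
  case False
  then have l: "l + 1 = m" using assms by simp
  have "(\<Sum>i<m. y ^ i * compan Q m $$ (i,l)) = (\<Sum>i<m. - (coeff Q i * y ^ i))"
    by (rule sum.cong) (use False assms in \<open>auto simp: compan_def\<close>)
  also have "\<dots> = - (\<Sum>i<m. coeff Q i * y ^ i)" by (simp add: sum_negf)
  also have "poly Q y = (\<Sum>i\<le>m. coeff Q i * y ^ i)" using assms by (simp add: poly_altdef)
  then have "(\<Sum>i<m. coeff Q i * y ^ i) = - (y ^ m)" using assms by (simp add: lessThan_Suc_atMost[symmetric])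
  finally show ?thesis using l by simp
qed


lemma poly_sum_le: fixes h :: "real poly" assumes "degree h \<le> K" shows "poly h x = (\<Sum>e\<le>K. coeff h e * x ^ e)"
proof -
  have "poly h x = (\<Sum>i\<le>degree h. coeff h i * x ^ i)" by (rule poly_altdef)
  also have "\<dots> = (\<Sum>e\<le>K. coeff h e * x ^ e)"
    by (rule sum.mono_neutral_left) (use assms in \<open>auto simp: coeff_eq_0\<close>)
  finally show ?thesis .
qed

lemma vand_compan_pow:
  assumes Q: "coeff Q m = 1" "degree Q = m" and r: "\<And>j. j < m \<Longrightarrow> poly Q (p j) = 0"
    and j: "j < m" and l: "l < m"
  shows "(vand p m * (compan Q m ^\<^sub>m e)) $$ (j,l) = p j ^ (e + l)"
  using l
proof (induction e arbitrary: l)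
  case 0
  have "vand p m * (compan Q m ^\<^sub>m 0) = vand p m"
    by (simp add: compan_def vand_def)
  then show ?case using 0 j by (simp add: vand_def)
next
  case (Suc e)
  have C: "compan Q m \<in> carrier_mat m m" "compan Q m ^\<^sub>m e \<in> carrier_mat m m" by auto
  have "vand p m * (compan Q m ^\<^sub>m Suc e) = (vand p m * (compan Q m ^\<^sub>m e)) * compan Q m"
    using C by (simp add: assoc_mult_mat[symmetric, of _ m m _ m _ m])
  then have "(vand p m * (compan Q m ^\<^sub>m Suc e)) $$ (j,l)
      = (\<Sum>i<m. (vand p m * (compan Q m ^\<^sub>m e)) $$ (j,i) * compan Q m $$ (i,l))"
    using mult_entry[OF mult_carrier_mat[OF vand_carrier C(2)] C(1) j Suc.prems] by simp
  also have "\<dots> = (\<Sum>i<m. p j ^ e * (p j ^ i * compan Q m $$ (i,l)))"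
    by (rule sum.cong) (use Suc.IH in \<open>auto simp: power_add\<close>)
  also have "\<dots> = p j ^ e * (\<Sum>i<m. p j ^ i * compan Q m $$ (i,l))"
    by (simp add: sum_distrib_left)
  also have "(\<Sum>i<m. p j ^ i * compan Q m $$ (i,l)) = p j ^ (l + 1)"
    by (rule vand_compan) (use Q r j Suc.prems in auto)
  finally show ?case by (simp add: power_add[symmetric])
qed

lemma vand_multm:
  assumes Q: "coeff Q m = 1" "degree Q = m" and r: "\<And>j. j < m \<Longrightarrow> poly Q (p j) = 0"
    and j: "j < m" and l: "l < m" and h: "degree h \<le> K"
  shows "(vand p m * multm Q m h K) $$ (j,l) = poly h (p j) * p j ^ l"
proof -
  have "(vand p m * multm Q m h K) $$ (j,l) = (\<Sum>i<m. vand p m $$ (j,i) * multm Q m h K $$ (i,l))"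
    using mult_entry[OF vand_carrier multm_carrier j l] by simp
  also have "\<dots> = (\<Sum>i<m. \<Sum>e\<le>K. coeff h e * (vand p m $$ (j,i) * (compan Q m ^\<^sub>m e) $$ (i,l)))"
    by (rule sum.cong) (use l in \<open>auto simp: multm_def sum_distrib_left mult_ac\<close>)
  also have "\<dots> = (\<Sum>e\<le>K. coeff h e * (\<Sum>i<m. vand p m $$ (j,i) * (compan Q m ^\<^sub>m e) $$ (i,l)))"
    by (subst sum.swap) (simp add: sum_distrib_left)
  also have "\<dots> = (\<Sum>e\<le>K. coeff h e * p j ^ (e + l))"
  proof (rule sum.cong)
    fix e assume "e \<in> {..K}"
    have "(\<Sum>i<m. vand p m $$ (j,i) * (compan Q m ^\<^sub>m e) $$ (i,l)) = (vand p m * (compan Q m ^\<^sub>m e)) $$ (j,l)"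
      using mult_entry[OF vand_carrier pow_carrier_mat[OF compan_carrier] j l] by simp
    also have "\<dots> = p j ^ (e + l)" by (rule vand_compan_pow[OF Q r j l])
    finally show "coeff h e * (\<Sum>i<m. vand p m $$ (j,i) * (compan Q m ^\<^sub>m e) $$ (i,l)) = coeff h e * p j ^ (e + l)"
      by simp
  qed simp
  also have "\<dots> = (\<Sum>e\<le>K. coeff h e * p j ^ e) * p j ^ l"
    by (simp add: sum_distrib_right power_add mult.assoc)
  also have "(\<Sum>e\<le>K. coeff h e * p j ^ e) = poly h (p j)"
    using poly_sum_le[OF h] by simp
  finally show ?thesis .
qed


lemma vand_inj:
  assumes m: "m \<ge> 1" and inj: "inj_on p {..<m}" and v: "v \<in> carrier_vec m"
    and z: "\<And>j. j < m \<Longrightarrow> (vand p m *\<^sub>v v) $ j = 0"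
  shows "v = 0\<^sub>v m"
proof -
  define V where "V = (\<Sum>l<m. monom (v $ l) l)"
  have coeffV: "coeff V i = (if i < m then v $ i else 0)" for i
    unfolding V_def by (simp add: coeff_sum coeff_monom sum.delta)
  have polyV: "poly V x = (\<Sum>l<m. v $ l * x ^ l)" for x
    unfolding V_def by (simp add: poly_sum poly_monom)
  have rootV: "poly V (p j) = 0" if "j < m" for j
  proof -
    have "(vand p m *\<^sub>v v) $ j = (\<Sum>l<m. vand p m $$ (j,l) * v $ l)"
      by (rule mult_vec_entry[OF vand_carrier v that])
    also have "\<dots> = (\<Sum>l<m. v $ l * p j ^ l)"
      by (rule sum.cong) (use that in \<open>auto simp: vand_def\<close>)
    finally show ?thesis using z[OF that] polyV by simp
  qed
  have V0: "V = 0"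
  proof (rule ccontr)
    assume nz: "V \<noteq> 0"
    have dV: "degree V \<le> m - 1"
      by (rule degree_le) (use coeffV in auto)
    have "p ` {..<m} \<subseteq> {x. poly V x = 0}" using rootV by auto
    then have "card (p ` {..<m}) \<le> card {x. poly V x = 0}"
      by (rule card_mono[OF poly_roots_finite[OF nz]])
    also have "\<dots> \<le> degree V" by (rule card_poly_roots_bound[OF nz])
    finally have "m \<le> degree V" using card_image[OF inj] by simp
    with dV m show False by simp
  qed
  show ?thesis
  proof (rule eq_vecI)
    fix i assume "i < dim_vec (0\<^sub>v m)"
    then have "i < m" by simp
    then show "v $ i = 0\<^sub>v m $ i" using coeffV[of i] V0 by simp
  qed (use v in simp)
qed

lemma trace_formula:
  fixes p :: "nat \<Rightarrow> real" and Q f g :: "real poly"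
  assumes m: "m \<ge> 1" and inj: "inj_on p {..<m}" and Q: "coeff Q m = 1" "degree Q = m"
    and r: "\<And>j. j < m \<Longrightarrow> poly Q (p j) = 0"
    and f: "degree f \<le> K" and g: "degree g \<le> K" and gnz: "\<And>j. j < m \<Longrightarrow> poly g (p j) \<noteq> 0"
  shows "det (multm Q m g K) \<noteq> 0 \<and>
    mtrace (multm Q m f K * adj_mat (multm Q m g K)) = det (multm Q m g K) * (\<Sum>j<m. poly f (p j) / poly g (p j))"
proof -
  define W where "W = vand p m"
  define Mf where "Mf = multm Q m f K"
  define Mg where "Mg = multm Q m g K"
  have Wc: "W \<in> carrier_mat m m" and Mfc: "Mf \<in> carrier_mat m m" and Mgc: "Mg \<in> carrier_mat m m"
    unfolding W_def Mf_def Mg_def by auto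
  have WMf: "(W * Mf) $$ (j,l) = poly f (p j) * p j ^ l" if "j < m" "l < m" for j l
    unfolding W_def Mf_def by (rule vand_multm[OF Q r that f])
  have WMg: "(W * Mg) $$ (j,l) = poly g (p j) * p j ^ l" if "j < m" "l < m" for j l
    unfolding W_def Mg_def by (rule vand_multm[OF Q r that g])
  have Wjl: "W $$ (j,l) = p j ^ l" if "j < m" "l < m" for j l
    using that unfolding W_def vand_def by simp
  have detW: "det W \<noteq> 0"
  proof (rule det_nonzero_inj[OF Wc])
    fix v :: "real vec" assume v: "v \<in> carrier_vec m" "W *\<^sub>v v = 0\<^sub>v m"
    show "v = 0\<^sub>v m" by (rule vand_inj[OF m inj v(1)]) (use v(2) in \<open>simp add: W_def\<close>)
  qed
  have detMg: "det Mg \<noteq> 0"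
  proof (rule det_nonzero_inj[OF Mgc])
    fix v :: "real vec" assume v: "v \<in> carrier_vec m" "Mg *\<^sub>v v = 0\<^sub>v m"
    show "v = 0\<^sub>v m"
    proof (rule vand_inj[OF m inj v(1)])
      fix j assume j: "j < m"
      have "((W * Mg) *\<^sub>v v) $ j = (W *\<^sub>v (Mg *\<^sub>v v)) $ j" using Wc Mgc v(1) by simp
      also have "\<dots> = (W *\<^sub>v 0\<^sub>v m) $ j" unfolding v(2) ..
      also have "\<dots> = (\<Sum>l<m. W $$ (j,l) * 0\<^sub>v m $ l)" by (rule mult_vec_entry[OF Wc zero_carrier_vec j])
      also have "\<dots> = 0" by simp
      finally have "((W * Mg) *\<^sub>v v) $ j = 0" .
      moreover have "((W * Mg) *\<^sub>v v) $ j = (\<Sum>l<m. (W * Mg) $$ (j,l) * v $ l)"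
        by (rule mult_vec_entry[OF mult_carrier_mat[OF Wc Mgc] v(1) j])
      moreover have "\<dots> = poly g (p j) * (\<Sum>l<m. W $$ (j,l) * v $ l)"
        unfolding sum_distrib_left by (rule sum.cong) (use j WMg Wjl in auto)
      moreover have "(\<Sum>l<m. W $$ (j,l) * v $ l) = (W *\<^sub>v v) $ j"
        by (rule mult_vec_entry[OF Wc v(1) j, symmetric])
      ultimately show "(vand p m *\<^sub>v v) $ j = 0" using gnz[OF j] by (simp add: W_def)
    qed
  qed
  define Y where "Y = adj_mat Mg"
  have Yc: "Y \<in> carrier_mat m m" and MgY: "Mg * Y = det Mg \<cdot>\<^sub>m 1\<^sub>m m"
    using adj_mat[OF Mgc] unfolding Y_def by auto
  have WY: "(W * Y) $$ (j,l) = det Mg * p j ^ l / poly g (p j)" if j: "j < m" and l: "l < m" for j l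
  proof -
    have "(W * Mg) * Y = W * (Mg * Y)" using Wc Mgc Yc by (simp add: assoc_mult_mat[of _ m m _ m _ m])
    also have "\<dots> = det Mg \<cdot>\<^sub>m W" unfolding MgY using mult_smult_distrib[OF Wc one_carrier_mat, of "det Mg"] Wc by simp
    finally have e: "((W * Mg) * Y) $$ (j,l) = det Mg * p j ^ l" using j l Wjl Wc by simp
    have "((W * Mg) * Y) $$ (j,l) = (\<Sum>i<m. (W * Mg) $$ (j,i) * Y $$ (i,l))"
      by (rule mult_entry[OF mult_carrier_mat[OF Wc Mgc] Yc j l])
    also have "\<dots> = poly g (p j) * (\<Sum>i<m. W $$ (j,i) * Y $$ (i,l))"
      unfolding sum_distrib_left by (rule sum.cong) (use j WMg Wjl in auto)
    also have "(\<Sum>i<m. W $$ (j,i) * Y $$ (i,l)) = (W * Y) $$ (j,l)"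
      by (rule mult_entry[OF Wc Yc j l, symmetric])
    finally show ?thesis using e gnz[OF j] by (simp add: field_simps)
  qed
  define X where "X = Mf * Y"
  have Xc: "X \<in> carrier_mat m m" unfolding X_def using Mfc Yc by simp
  define c where "c j = det Mg * poly f (p j) / poly g (p j)" for j
  have WX: "(W * X) $$ (j,l) = c j * p j ^ l" if j: "j < m" and l: "l < m" for j l
  proof -
    have "W * X = (W * Mf) * Y" unfolding X_def using Wc Mfc Yc by (simp add: assoc_mult_mat[of _ m m _ m _ m])
    then have "(W * X) $$ (j,l) = (\<Sum>i<m. (W * Mf) $$ (j,i) * Y $$ (i,l))"
      using mult_entry[OF mult_carrier_mat[OF Wc Mfc] Yc j l] by simp
    also have "\<dots> = poly f (p j) * (\<Sum>i<m. W $$ (j,i) * Y $$ (i,l))"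
      unfolding sum_distrib_left by (rule sum.cong) (use j WMf Wjl in auto)
    also have "(\<Sum>i<m. W $$ (j,i) * Y $$ (i,l)) = (W * Y) $$ (j,l)"
      by (rule mult_entry[OF Wc Yc j l, symmetric])
    finally show ?thesis using WY[OF j l] unfolding c_def by simp
  qed
  define Wi where "Wi = (1 / det W) \<cdot>\<^sub>m adj_mat W"
  have Wic: "Wi \<in> carrier_mat m m" unfolding Wi_def using adj_mat(1)[OF Wc] by simp
  have WiW: "Wi * W = 1\<^sub>m m"
  proof -
    have "Wi * W = (1 / det W) \<cdot>\<^sub>m (adj_mat W * W)" unfolding Wi_def
      by (rule mult_smult_assoc_mat[OF adj_mat(1)[OF Wc] Wc])
    also have "\<dots> = (1 / det W) \<cdot>\<^sub>m (det W \<cdot>\<^sub>m 1\<^sub>m m)" using adj_mat(3)[OF Wc] by simp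
    also have "\<dots> = 1\<^sub>m m" using detW by (intro eq_matI) auto
    finally show ?thesis .
  qed
  have WWi: "W * Wi = 1\<^sub>m m"
  proof -
    have "W * Wi = (1 / det W) \<cdot>\<^sub>m (W * adj_mat W)" unfolding Wi_def
      by (rule mult_smult_distrib[OF Wc adj_mat(1)[OF Wc]])
    also have "\<dots> = (1 / det W) \<cdot>\<^sub>m (det W \<cdot>\<^sub>m 1\<^sub>m m)" using adj_mat(2)[OF Wc] by simp
    also have "\<dots> = 1\<^sub>m m" using detW by (intro eq_matI) auto
    finally show ?thesis .
  qed
  have "X = Wi * (W * X)"
  proof -
    have "Wi * (W * X) = (Wi * W) * X" using Wic Wc Xc by (simp add: assoc_mult_mat[of _ m m _ m _ m])
    also have "\<dots> = X" unfolding WiW using Xc by simp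
    finally show ?thesis by simp
  qed
  then have "mtrace X = mtrace ((W * X) * Wi)"
    using mtrace_comm[OF Wic mult_carrier_mat[OF Wc Xc]] by simp
  also have "\<dots> = (\<Sum>j<m. ((W * X) * Wi) $$ (j,j))" unfolding mtrace_def using Wc by simp
  also have "\<dots> = (\<Sum>j<m. c j)"
  proof (rule sum.cong)
    fix j assume "j \<in> {..<m}" then have j: "j < m" by simp
    have "((W * X) * Wi) $$ (j,j) = (\<Sum>l<m. (W * X) $$ (j,l) * Wi $$ (l,j))"
      by (rule mult_entry[OF mult_carrier_mat[OF Wc Xc] Wic j j])
    also have "\<dots> = c j * (\<Sum>l<m. W $$ (j,l) * Wi $$ (l,j))"
      unfolding sum_distrib_left by (rule sum.cong) (use j WX Wjl in auto)
    also have "(\<Sum>l<m. W $$ (j,l) * Wi $$ (l,j)) = (W * Wi) $$ (j,j)"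
      by (rule mult_entry[OF Wc Wic j j, symmetric])
    also have "\<dots> = 1" unfolding WWi using j by simp
    finally show "((W * X) * Wi) $$ (j,j) = c j" by simp
  qed simp
  also have "\<dots> = det Mg * (\<Sum>j<m. poly f (p j) / poly g (p j))"
    unfolding c_def by (simp add: sum_distrib_left)
  finally show ?thesis using detMg unfolding X_def Y_def Mf_def Mg_def by simp
qed


lemma map_poly_of_real_mult:
  "map_poly (of_real :: real \<Rightarrow> complex) (p * q) = map_poly of_real p * map_poly of_real q"
  by (rule poly_eqI) (simp add: coeff_map_poly coeff_mult of_real_sum)

lemma poly_map_of_real: "poly (map_poly (of_real :: real \<Rightarrow> complex) p) (of_real x) = of_real (poly p x)"
  by (induction p) (auto simp: map_poly_pCons)

lemma real_rooted_factor: "real_rooted (a * q) \<Longrightarrow> real_rooted q"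
  unfolding real_rooted_def by (auto simp: map_poly_of_real_mult)

lemma real_rooted_no_roots_const:
  assumes "real_rooted p" "\<And>x. poly p x \<noteq> 0"
  shows "degree p = 0"
proof (rule ccontr)
  assume "degree p \<noteq> 0"
  then have "degree (map_poly (of_real :: real \<Rightarrow> complex) p) \<noteq> 0"
    by (simp add: degree_map_poly)
  then have "\<not> constant (poly (map_poly (of_real :: real \<Rightarrow> complex) p))"
    by (subst constant_degree) simp
  then obtain z :: complex where z: "poly (map_poly of_real p) z = 0"
    using fundamental_theorem_of_algebra by blast
  then have "z \<in> \<real>" using assms(1) unfolding real_rooted_def by blast
  then obtain x where "z = of_real x" by (auto elim: Reals_cases)
  with z have "poly p x = 0" using poly_map_of_real[of p x] by simp
  with assms(2) show False by blast
qed

lemma real_decompose: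
  "real_rooted p \<Longrightarrow> Polynomial.smult (lead_coeff p) (\<Prod>z|poly p z = 0. [:-z, 1:] ^ order z p) = (p :: real poly)"
proof (induction p rule: poly_root_order_induct)
  case (no_roots p)
  then have "degree p = 0" using real_rooted_no_roots_const by blast
  then obtain c where "p = [:c:]" by (elim degree_eq_zeroE)
  then show ?case using no_roots by simp
next
  case (root p x n)
  then have rr: "real_rooted p" using real_rooted_factor by blast
  from root have *: "{z. poly ([:- x, 1:] ^ n * p) z = 0} = insert x {z. poly p z = 0}"
    by auto
  have "Polynomial.smult (lead_coeff ([:-x, 1:] ^ n * p))
           (\<Prod>z|poly ([:-x,1:] ^ n * p) z = 0. [:-z, 1:] ^ order z ([:- x, 1:] ^ n * p)) =
        [:- x, 1:] ^ order x ([:- x, 1:] ^ n * p) *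
          Polynomial.smult (lead_coeff p) (\<Prod>z\<in>{z. poly p z = 0}. [:- z, 1:] ^ order z ([:- x, 1:] ^ n * p))"
    by (subst *, subst prod.insert)
       (insert root, auto intro: poly_roots_finite simp: mult_ac lead_coeff_mult lead_coeff_power)
  also have "order x ([:- x, 1:] ^ n * p) = n"
    using root by (subst order_mult) (auto simp: order_power_n_n order_0I)
  also have "(\<Prod>z\<in>{z. poly p z = 0}. [:- z, 1:] ^ order z ([:- x, 1:] ^ n * p)) =
               (\<Prod>z\<in>{z. poly p z = 0}. [:- z, 1:] ^ order z p)"
  proof (intro prod.cong refl, goal_cases)
    case (1 y)
    with root have "order y ([:-x,1:] ^ n) = 0" by (intro order_0I) auto
    thus ?case using root by (subst order_mult) auto
  qed
  also note root.IH[OF rr]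
  finally show ?case .
qed simp_all


definition Gp :: "real poly \<Rightarrow> real poly" where
  "Gp P = (\<Prod>x\<in>root_set P. [:-x,1:] ^ (order x P - 1))"
definition Qp :: "real poly \<Rightarrow> real poly" where
  "Qp P = (\<Prod>x\<in>root_set P. [:-x,1:])"
definition Tp :: "real poly \<Rightarrow> real poly" where
  "Tp P = (\<Sum>x\<in>root_set P. Polynomial.smult (of_nat (order x P)) (\<Prod>y\<in>root_set P - {x}. [:-y,1:]))"

lemma rs_finite: "P \<noteq> 0 \<Longrightarrow> finite (root_set P)"
  unfolding root_set_def by (rule poly_roots_finite)

lemma rs_order: "P \<noteq> 0 \<Longrightarrow> x \<in> root_set P \<Longrightarrow> order x P \<ge> 1"
  unfolding root_set_def using order_root[of P x] by auto

lemma rs_decomp: "real_rooted P \<Longrightarrow> P = Polynomial.smult (lead_coeff P) (\<Prod>x\<in>root_set P. [:-x,1:] ^ order x P)"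
  using real_decompose[of P] unfolding root_set_def by simp

lemma GQ: assumes "P \<noteq> 0" shows "Gp P * Qp P = (\<Prod>x\<in>root_set P. [:-x,1:] ^ order x P)"
proof -
  have "Gp P * Qp P = (\<Prod>x\<in>root_set P. [:-x,1:] ^ (order x P - 1) * [:-x,1:])"
    unfolding Gp_def Qp_def by (rule prod.distrib[symmetric])
  also have "\<dots> = (\<Prod>x\<in>root_set P. [:-x,1:] ^ order x P)"
  proof (rule prod.cong)
    fix x assume "x \<in> root_set P"
    then have "order x P \<ge> 1" using rs_order[OF assms] by blast
    then show "[:-x,1:] ^ (order x P - 1) * [:-x,1:] = [:-x,1:] ^ order x P"
      by (cases "order x P") (auto simp: mult.commute)
  qed simp
  finally show ?thesis .
qed

lemma P_eq: assumes "P \<noteq> 0" "real_rooted P" shows "P = Polynomial.smult (lead_coeff P) (Gp P * Qp P)"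
  using rs_decomp[OF assms(2)] GQ[OF assms(1)] by simp

lemma G_rem: assumes "P \<noteq> 0" "x \<in> root_set P"
  shows "Gp P = [:-x,1:] ^ (order x P - 1) * (\<Prod>y\<in>root_set P - {x}. [:-y,1:] ^ (order y P - 1))"
  unfolding Gp_def using prod.remove[OF rs_finite[OF assms(1)] assms(2)] by simp

lemma dP_eq: assumes "P \<noteq> 0" "real_rooted P" shows "pderiv P = Polynomial.smult (lead_coeff P) (Gp P * Tp P)"
proof -
  let ?rs = "root_set P" and ?L = "\<lambda>x. [:-x,1::real:]"
  have fin: "finite ?rs" by (rule rs_finite[OF assms(1)])
  have "pderiv P = Polynomial.smult (lead_coeff P) (pderiv (\<Prod>x\<in>?rs. ?L x ^ order x P))"
    by (subst rs_decomp[OF assms(2)]) (simp add: pderiv_smult)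
  also have "pderiv (\<Prod>x\<in>?rs. ?L x ^ order x P)
      = (\<Sum>x\<in>?rs. (\<Prod>y\<in>?rs - {x}. ?L y ^ order y P) * pderiv (?L x ^ order x P))"
    by (rule pderiv_prod)
  also have "\<dots> = (\<Sum>x\<in>?rs. Polynomial.smult (of_nat (order x P)) (Gp P * (\<Prod>y\<in>?rs - {x}. ?L y)))"
  proof (rule sum.cong)
    fix x assume x: "x \<in> ?rs"
    have r: "order x P \<ge> 1" using rs_order[OF assms(1) x] .
    have "Gp P * (\<Prod>y\<in>?rs - {x}. ?L y)
        = ?L x ^ (order x P - 1) * ((\<Prod>y\<in>?rs - {x}. ?L y ^ (order y P - 1)) * (\<Prod>y\<in>?rs - {x}. ?L y))"
      by (subst G_rem[OF assms(1) x]) (simp add: mult.assoc)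
    also have "(\<Prod>y\<in>?rs - {x}. ?L y ^ (order y P - 1)) * (\<Prod>y\<in>?rs - {x}. ?L y)
        = (\<Prod>y\<in>?rs - {x}. ?L y ^ order y P)"
    proof -
      have "(\<Prod>y\<in>?rs - {x}. ?L y ^ (order y P - 1)) * (\<Prod>y\<in>?rs - {x}. ?L y)
          = (\<Prod>y\<in>?rs - {x}. ?L y ^ (order y P - 1) * ?L y)" by (rule prod.distrib[symmetric])
      also have "\<dots> = (\<Prod>y\<in>?rs - {x}. ?L y ^ order y P)"
      proof (rule prod.cong)
        fix y assume "y \<in> ?rs - {x}"
        then have "order y P \<ge> 1" using rs_order[OF assms(1)] by blast
        then show "?L y ^ (order y P - 1) * ?L y = ?L y ^ order y P"
          by (cases "order y P") (auto simp: mult.commute)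
      qed simp
      finally show ?thesis .
    qed
    finally have e: "Gp P * (\<Prod>y\<in>?rs - {x}. ?L y) = ?L x ^ (order x P - 1) * (\<Prod>y\<in>?rs - {x}. ?L y ^ order y P)" .
    have "pderiv (?L x ^ order x P) = Polynomial.smult (of_nat (order x P)) (?L x ^ (order x P - 1))"
      by (simp add: pderiv_power pderiv_pCons)
    then show "(\<Prod>y\<in>?rs - {x}. ?L y ^ order y P) * pderiv (?L x ^ order x P)
        = Polynomial.smult (of_nat (order x P)) (Gp P * (\<Prod>y\<in>?rs - {x}. ?L y))"
      by (simp add: e mult.commute)
  qed simp
  also have "\<dots> = Gp P * Tp P"
    unfolding Tp_def by (simp add: sum_distrib_left mult_smult_right)
  finally show ?thesis .
qed


lemma pderiv_sum': "pderiv (\<Sum>x\<in>A. f x) = (\<Sum>x\<in>A. pderiv (f x))"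
  by (induction A rule: infinite_finite_induct) (auto simp: pderiv_add)

lemma pderiv_lin: "pderiv [:-x, 1::real:] = 1"
  by (simp add: pderiv_pCons)

lemma sum_order: assumes "P \<noteq> 0" "real_rooted P"
  shows "(\<Sum>x\<in>root_set P. order x P) = degree P"
proof -
  have "degree P = degree (\<Prod>x\<in>root_set P. [:-x,1::real:] ^ order x P)"
    by (subst rs_decomp[OF assms(2)]) (use assms(1) in simp)
  also have "\<dots> = (\<Sum>x\<in>root_set P. degree ([:-x,1::real:] ^ order x P))"
    by (rule degree_prod_sum_eq) simp
  also have "\<dots> = (\<Sum>x\<in>root_set P. order x P)" by (simp add: degree_power_eq)
  finally show ?thesis by simp
qed

lemma Qp_deg: assumes "P \<noteq> 0" shows "degree (Qp P) = card (root_set P)" "coeff (Qp P) (card (root_set P)) = 1"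
proof -
  have "degree (Qp P) = (\<Sum>x\<in>root_set P. degree [:-x,1::real:])"
    unfolding Qp_def by (rule degree_prod_sum_eq) simp
  then show d: "degree (Qp P) = card (root_set P)" by simp
  have "lead_coeff (Qp P) = 1" unfolding Qp_def by (simp add: lead_coeff_prod)
  then show "coeff (Qp P) (card (root_set P)) = 1" using d by simp
qed

lemma Gp_deg: assumes "P \<noteq> 0" shows "degree (Gp P) = (\<Sum>x\<in>root_set P. order x P - 1)"
  "coeff (Gp P) (degree (Gp P)) = 1" "Gp P \<noteq> 0"
proof -
  show "degree (Gp P) = (\<Sum>x\<in>root_set P. order x P - 1)"
    unfolding Gp_def by (subst degree_prod_sum_eq) (auto simp: degree_power_eq)
  have "lead_coeff (Gp P) = 1" unfolding Gp_def by (simp add: lead_coeff_prod lead_coeff_power)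
  then show "coeff (Gp P) (degree (Gp P)) = 1" by simp
  then show "Gp P \<noteq> 0" by auto
qed

lemma Qp_root: "x \<in> root_set P \<Longrightarrow> P \<noteq> 0 \<Longrightarrow> poly (Qp P) x = 0"
  unfolding Qp_def using rs_finite by (auto simp: poly_prod)

lemma Tp_root: assumes "P \<noteq> 0" "x \<in> root_set P"
  shows "poly (Tp P) x = of_nat (order x P) * (\<Prod>y\<in>root_set P - {x}. (x - y))"
proof -
  have fin: "finite (root_set P)" by (rule rs_finite[OF assms(1)])
  have "poly (Tp P) x = (\<Sum>z\<in>root_set P. of_nat (order z P) * (\<Prod>y\<in>root_set P - {z}. (x - y)))"
    unfolding Tp_def by (simp add: poly_sum poly_prod)
  also have "\<dots> = of_nat (order x P) * (\<Prod>y\<in>root_set P - {x}. (x - y))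
      + (\<Sum>z\<in>root_set P - {x}. of_nat (order z P) * (\<Prod>y\<in>root_set P - {z}. (x - y)))"
    by (rule sum.remove[OF fin assms(2)])
  also have "(\<Sum>z\<in>root_set P - {x}. of_nat (order z P) * (\<Prod>y\<in>root_set P - {z}. (x - y))) = 0"
  proof (rule sum.neutral, rule ballI)
    fix z assume z: "z \<in> root_set P - {x}"
    have "(\<Prod>y\<in>root_set P - {z}. (x - y)) = 0"
      by (rule prod_zero) (use fin z assms(2) in auto)
    then show "of_nat (order z P) * (\<Prod>y\<in>root_set P - {z}. (x - y)) = 0" by simp
  qed
  finally show ?thesis by simp
qed

lemma Tp_deg: assumes "P \<noteq> 0" shows "degree (Tp P) \<le> card (root_set P) - 1"
  unfolding Tp_def
proof (rule degree_sum_le)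
  show "finite (root_set P)" by (rule rs_finite[OF assms])
  fix x assume x: "x \<in> root_set P"
  have "degree (\<Prod>y\<in>root_set P - {x}. [:-y,1::real:]) = (\<Sum>y\<in>root_set P - {x}. degree [:-y,1::real:])"
    by (rule degree_prod_sum_eq) simp
  also have "\<dots> = card (root_set P) - 1" using x rs_finite[OF assms] by simp
  finally show "degree (Polynomial.smult (of_nat (order x P)) (\<Prod>y\<in>root_set P - {x}. [:-y,1::real:])) \<le> card (root_set P) - 1"
    using degree_smult_le order.trans by metis
qed

lemma Qp_dd: assumes "P \<noteq> 0" "x \<in> root_set P"
  shows "poly (pderiv (pderiv (Qp P))) x = 2 * (\<Sum>k\<in>root_set P - {x}. \<Prod>y\<in>root_set P - {x} - {k}. (x - y))"
proof -
  let ?rs = "root_set P"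
  have fin: "finite ?rs" by (rule rs_finite[OF assms(1)])
  define F where "F a b = (\<Prod>y\<in>?rs - {a} - {b}. (x - y))" for a b
  have "pderiv (Qp P) = (\<Sum>a\<in>?rs. \<Prod>y\<in>?rs - {a}. [:-y,1:])"
    unfolding Qp_def by (simp add: pderiv_prod pderiv_lin)
  then have "pderiv (pderiv (Qp P)) = (\<Sum>a\<in>?rs. \<Sum>b\<in>?rs - {a}. \<Prod>y\<in>?rs - {a} - {b}. [:-y,1:])"
    by (simp add: pderiv_sum' pderiv_prod pderiv_lin)
  then have e1: "poly (pderiv (pderiv (Qp P))) x = (\<Sum>a\<in>?rs. \<Sum>b\<in>?rs - {a}. F a b)"
    unfolding F_def by (simp add: poly_sum poly_prod)
  have z: "F a b = 0" if "a \<noteq> x" "b \<noteq> x" "a \<in> ?rs" for a b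
    unfolding F_def by (rule prod_zero) (use fin that assms(2) in auto)
  have inner: "(\<Sum>b\<in>?rs - {a}. F a b) = F a x" if a: "a \<in> ?rs - {x}" for a
  proof -
    have "x \<in> ?rs - {a}" using a assms(2) by auto
    then have "(\<Sum>b\<in>?rs - {a}. F a b) = F a x + (\<Sum>b\<in>?rs - {a} - {x}. F a b)"
      by (rule sum.remove[OF finite_Diff[OF fin]])
    also have "(\<Sum>b\<in>?rs - {a} - {x}. F a b) = 0"
      by (rule sum.neutral) (use z a in auto)
    finally show ?thesis by simp
  qed
  have "(\<Sum>a\<in>?rs. \<Sum>b\<in>?rs - {a}. F a b) = (\<Sum>b\<in>?rs - {x}. F x b) + (\<Sum>a\<in>?rs - {x}. \<Sum>b\<in>?rs - {a}. F a b)"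
    by (rule sum.remove[OF fin assms(2)])
  also have "(\<Sum>a\<in>?rs - {x}. \<Sum>b\<in>?rs - {a}. F a b) = (\<Sum>a\<in>?rs - {x}. F x a)"
  proof (rule sum.cong)
    fix a assume a: "a \<in> ?rs - {x}"
    have "F a x = F x a" unfolding F_def by (simp add: Diff_insert2[symmetric] insert_commute)
    then show "(\<Sum>b\<in>?rs - {a}. F a b) = F x a" using inner[OF a] by simp
  qed simp
  finally show ?thesis using e1 unfolding F_def by simp
qed


lemma Zsum_pairs:
  fixes A :: "real set" and r :: "real \<Rightarrow> real"
  assumes fin: "finite A"
  shows "(\<Sum>p\<in>A. \<Sum>q\<in>A. if p < q then (1 / r q - 1 / r p) / (q - p) else 0)
       = (\<Sum>a\<in>A. \<Sum>b\<in>A - {a}. 1 / (r a * (a - b)))"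
proof -
  define h where "h a b = 1 / (r a * (a - b))" for a b
  have "(\<Sum>p\<in>A. \<Sum>q\<in>A. if p < q then (1 / r q - 1 / r p) / (q - p) else 0)
      = (\<Sum>p\<in>A. \<Sum>q\<in>A. (if p < q then h q p else 0) + (if p < q then h p q else 0))"
  proof (intro sum.cong refl)
    fix p q :: real
    show "(if p < q then (1 / r q - 1 / r p) / (q - p) else 0) = (if p < q then h q p else 0) + (if p < q then h p q else 0)"
    proof (cases "p < q")
      case True
      then have "q - p \<noteq> 0" "p - q \<noteq> 0" by auto
      have e1: "(1 / r q - 1 / r p) / (q - p) = 1 / (r q * (q - p)) - 1 / (r p * (q - p))"
        by (simp add: diff_divide_distrib)
      have e2: "r p * (p - q) = - (r p * (q - p))" by (simp add: algebra_simps)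
      have "(1 / r q - 1 / r p) / (q - p) = 1 / (r q * (q - p)) + 1 / (r p * (p - q))"
        unfolding e1 e2 by simp
      then show ?thesis using True unfolding h_def by simp
    qed simp
  qed
  also have "\<dots> = (\<Sum>p\<in>A. \<Sum>q\<in>A. if p < q then h q p else 0) + (\<Sum>p\<in>A. \<Sum>q\<in>A. if p < q then h p q else 0)"
    by (simp add: sum.distrib)
  also have "(\<Sum>p\<in>A. \<Sum>q\<in>A. if p < q then h q p else 0) = (\<Sum>a\<in>A. \<Sum>b\<in>A. if b < a then h a b else 0)"
    by (rule sum.swap)
  also have "(\<Sum>a\<in>A. \<Sum>b\<in>A. if b < a then h a b else 0) + (\<Sum>p\<in>A. \<Sum>q\<in>A. if p < q then h p q else 0)
      = (\<Sum>a\<in>A. \<Sum>b\<in>A. if b \<noteq> a then h a b else 0)"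
    by (simp add: sum.distrib[symmetric]) (intro sum.cong refl, auto)
  also have "\<dots> = (\<Sum>a\<in>A. \<Sum>b\<in>A - {a}. h a b)"
  proof (rule sum.cong)
    fix a assume "a \<in> A"
    have "(\<Sum>b\<in>A. if b \<noteq> a then h a b else 0) = (\<Sum>b\<in>{b\<in>A. b \<noteq> a}. h a b)"
      by (rule sum.inter_filter[symmetric]) (rule fin)
    also have "{b\<in>A. b \<noteq> a} = A - {a}" by auto
    finally show "(\<Sum>b\<in>A. if b \<noteq> a then h a b else 0) = (\<Sum>b\<in>A - {a}. h a b)" .
  qed simp
  finally show ?thesis unfolding h_def .
qed

lemma Zsum_eq: assumes "P \<noteq> 0" "real_rooted P"
  shows "Zsum P = (\<Sum>x\<in>root_set P. poly (pderiv (pderiv (Qp P))) x / poly (Polynomial.smult 2 (Tp P)) x)"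
proof -
  let ?rs = "root_set P"
  have fin: "finite ?rs" by (rule rs_finite[OF assms(1)])
  have "Zsum P = (\<Sum>a\<in>?rs. \<Sum>b\<in>?rs - {a}. 1 / (real (order a P) * (a - b)))"
    unfolding Zsum_def by (rule Zsum_pairs[OF fin])
  also have "\<dots> = (\<Sum>x\<in>?rs. poly (pderiv (pderiv (Qp P))) x / poly (Polynomial.smult 2 (Tp P)) x)"
  proof (rule sum.cong)
    fix x assume x: "x \<in> ?rs"
    define F where "F k = (\<Prod>y\<in>?rs - {x} - {k}. (x - y))" for k
    define Pi where "Pi = (\<Prod>y\<in>?rs - {x}. (x - y))"
    have r: "real (order x P) \<noteq> 0" using rs_order[OF assms(1) x] by simp
    have Pi0: "Pi \<noteq> 0" unfolding Pi_def using fin by (subst prod_zero_iff) auto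
    have PiF: "Pi = (x - k) * F k" if "k \<in> ?rs - {x}" for k
      unfolding Pi_def F_def by (rule prod.remove[OF finite_Diff[OF fin] that])
    have "poly (pderiv (pderiv (Qp P))) x / poly (Polynomial.smult 2 (Tp P)) x
        = (2 * (\<Sum>k\<in>?rs - {x}. F k)) / (2 * (real (order x P) * Pi))"
      using Qp_dd[OF assms(1) x] Tp_root[OF assms(1) x] unfolding F_def Pi_def by simp
    also have "\<dots> = (\<Sum>k\<in>?rs - {x}. F k / (real (order x P) * Pi))"
      by (simp add: sum_divide_distrib)
    also have "\<dots> = (\<Sum>k\<in>?rs - {x}. 1 / (real (order x P) * (x - k)))"
    proof (rule sum.cong)
      fix k assume k: "k \<in> ?rs - {x}"
      have "F k \<noteq> 0" "x - k \<noteq> 0" using PiF[OF k] Pi0 by auto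
      then have "F k / (real (order x P) * ((x - k) * F k)) = 1 / (real (order x P) * (x - k))"
        using r by (simp add: field_simps)
      then show "F k / (real (order x P) * Pi) = 1 / (real (order x P) * (x - k))"
        using PiF[OF k] by simp
    qed simp
    finally show "(\<Sum>b\<in>?rs - {x}. 1 / (real (order x P) * (x - b))) =
        poly (pderiv (pderiv (Qp P))) x / poly (Polynomial.smult 2 (Tp P)) x" by simp
  qed simp
  finally show ?thesis .
qed


definition Amat :: "real poly \<Rightarrow> nat \<Rightarrow> nat \<Rightarrow> real mat" where
  "Amat P m d = mat (2*m) (2*m) (\<lambda>(r,c). if c < m then (if c \<le> d + r then - coeff (pderiv P) (d + r - c) else 0)
      else (if c - m \<le> d + r then coeff P (d + r - (c - m)) else 0))"

definition bvec :: "real poly \<Rightarrow> nat \<Rightarrow> nat \<Rightarrow> real vec" where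
  "bvec P m d = vec (2*m) (\<lambda>r. if m \<le> d + r then coeff (pderiv P) (d + r - m) else 0)"

definition Lv :: "nat \<Rightarrow> real vec \<Rightarrow> real poly" where "Lv m v = (\<Sum>c<m. monom (v $ c) c)"
definition Tv :: "nat \<Rightarrow> real vec \<Rightarrow> real poly" where "Tv m v = (\<Sum>c<m. monom (v $ (m + c)) c)"

lemma coeff_Lv: "coeff (Lv m v) i = (if i < m then v $ i else 0)"
  unfolding Lv_def by (simp add: coeff_sum sum.delta)

lemma coeff_Tv: "coeff (Tv m v) i = (if i < m then v $ (m + i) else 0)"
  unfolding Tv_def by (simp add: coeff_sum sum.delta)

lemma sum_split2: "(\<Sum>i<2*m. f i) = (\<Sum>i<m. f i) + (\<Sum>i<m. f (m + i :: nat))"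
proof -
  have 1: "(\<Sum>i<2*m. f i) = sum f {0..<m} + sum f {m..<2*m}"
    using sum.atLeastLessThan_concat[of 0 m "2*m" f] by (simp add: atLeast0LessThan)
  have 2: "sum f {m..<2*m} = (\<Sum>i<m. f (m+i))"
    using sum.shift_bounds_nat_ivl[of f 0 m m] by (simp add: atLeast0LessThan mult_2 add.commute)
  show ?thesis using 1 2 by (simp add: atLeast0LessThan)
qed

lemma coeff_sum_monom_mult: "coeff ((\<Sum>c<m. monom (a c) c) * p) t = (\<Sum>c<m. if c \<le> t then a c * coeff p (t - c) else 0)"
proof -
  have "coeff ((\<Sum>c<m. monom (a c) c) * p) t = (\<Sum>c<m. coeff (monom (a c) c * p) t)"
    by (simp add: sum_distrib_right coeff_sum)
  also have "\<dots> = (\<Sum>c<m. if c \<le> t then a c * coeff p (t - c) else 0)"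
    by (rule sum.cong) (auto simp: coeff_monom_mult)
  finally show ?thesis .
qed

lemma A_apply:
  assumes v: "v \<in> carrier_vec (2*m)" and r: "r < 2*m"
  shows "(Amat P m d *\<^sub>v v) $ r = coeff (Tv m v * P - Lv m v * pderiv P) (d + r)"
proof -
  have Ac: "Amat P m d \<in> carrier_mat (2*m) (2*m)" by (simp add: Amat_def)
  have "(Amat P m d *\<^sub>v v) $ r = (\<Sum>c<2*m. Amat P m d $$ (r,c) * v $ c)"
    by (rule mult_vec_entry[OF Ac v r])
  also have "\<dots> = (\<Sum>c<m. Amat P m d $$ (r,c) * v $ c) + (\<Sum>c<m. Amat P m d $$ (r,m+c) * v $ (m+c))"
    by (rule sum_split2)
  also have "(\<Sum>c<m. Amat P m d $$ (r,c) * v $ c) = - (\<Sum>c<m. if c \<le> d + r then v $ c * coeff (pderiv P) (d + r - c) else 0)"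
    unfolding sum_negf[symmetric] by (rule sum.cong) (use r in \<open>auto simp: Amat_def\<close>)
  also have "(\<Sum>c<m. Amat P m d $$ (r,m+c) * v $ (m+c)) = (\<Sum>c<m. if c \<le> d + r then v $ (m+c) * coeff P (d + r - c) else 0)"
    by (rule sum.cong) (use r in \<open>auto simp: Amat_def\<close>)
  finally show ?thesis
    unfolding Lv_def Tv_def coeff_diff coeff_sum_monom_mult by simp
qed


lemma Hrel:
  assumes P: "P \<noteq> 0" "real_rooted P"
  shows "Tt * P - Lq * pderiv P = Polynomial.smult (lead_coeff P) (Gp P * (Tt * Qp P - Lq * Tp P))"
proof -
  define a G Q T where "a = lead_coeff P" and "G = Gp P" and "Q = Qp P" and "T = Tp P"
  have eP: "P = Polynomial.smult a (G * Q)" unfolding a_def G_def Q_def by (rule P_eq[OF P])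
  have eD: "pderiv P = Polynomial.smult a (G * T)" unfolding a_def G_def T_def by (rule dP_eq[OF P])
  have "Tt * P - Lq * pderiv P = Polynomial.smult a (G * (Tt * Q - Lq * T))"
    unfolding eD by (subst eP) (simp add: algebra_simps mult_smult_right smult_diff_right)
  then show ?thesis unfolding a_def G_def Q_def T_def .
qed

lemma deg_Gp: assumes P: "P \<noteq> 0" "real_rooted P"
  shows "degree (Gp P) = degree P - card (root_set P)" "card (root_set P) \<le> degree P"
proof -
  have fin: "finite (root_set P)" by (rule rs_finite[OF P(1)])
  have "(\<Sum>x\<in>root_set P. order x P - 1) = (\<Sum>x\<in>root_set P. order x P) - (\<Sum>x\<in>root_set P. 1)"
    by (rule sum_subtractf_nat) (use rs_order[OF P(1)] in auto)
  then show "degree (Gp P) = degree P - card (root_set P)"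
    using Gp_deg(1)[OF P(1)] sum_order[OF P] by simp
  have "(\<Sum>x\<in>root_set P. (1::nat)) \<le> (\<Sum>x\<in>root_set P. order x P)"
    by (rule sum_mono) (use rs_order[OF P(1)] in auto)
  then show "card (root_set P) \<le> degree P" using sum_order[OF P] by simp
qed

lemma Tp_root_nz: assumes "P \<noteq> 0" "x \<in> root_set P" shows "poly (Tp P) x \<noteq> 0"
proof -
  have "(\<Prod>y\<in>root_set P - {x}. (x - y)) \<noteq> 0"
    using rs_finite[OF assms(1)] by (subst prod_zero_iff) auto
  moreover have "real (order x P) \<noteq> 0" using rs_order[OF assms] by simp
  ultimately show ?thesis using Tp_root[OF assms] by simp
qed

lemma few_roots_zero:
  fixes L :: "real poly"
  assumes "degree L < card A" "finite A" "\<And>x. x \<in> A \<Longrightarrow> poly L x = 0"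
  shows "L = 0"
proof (rule ccontr)
  assume nz: "L \<noteq> 0"
  have "A \<subseteq> {x. poly L x = 0}" using assms(3) by auto
  then have "card A \<le> card {x. poly L x = 0}" by (rule card_mono[OF poly_roots_finite[OF nz]])
  also have "\<dots> \<le> degree L" by (rule card_poly_roots_bound[OF nz])
  finally show False using assms(1) by simp
qed


lemma system:
  assumes P: "P \<noteq> 0" "real_rooted P" and m: "card (root_set P) = m" "m \<ge> 1"
    and d: "d = degree P - m"
  shows "det (Amat P m d) \<noteq> 0 \<and>
    (\<forall>c<m. coeff (Qp P) c = det (replace_col (Amat P m d) (bvec P m d) c) / det (Amat P m d)) \<and>
    (\<forall>c<m. coeff (Tp P) c = det (replace_col (Amat P m d) (bvec P m d) (m + c)) / det (Amat P m d))"
proof -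
  define n where "n = degree P"
  define A where "A = Amat P m d"
  define b where "b = bvec P m d"
  have Ac: "A \<in> carrier_mat (2*m) (2*m)" unfolding A_def by (simp add: Amat_def)
  have bc: "b \<in> carrier_vec (2*m)" unfolding b_def by (simp add: bvec_def)
  have mn: "m \<le> n" using deg_Gp(2)[OF P] m n_def by simp
  have dG: "degree (Gp P) = d" using deg_Gp(1)[OF P] m d n_def by simp
  have a0: "lead_coeff P \<noteq> 0" using P by simp
  have fin: "finite (root_set P)" by (rule rs_finite[OF P(1)])
  have Q0: "Qp P \<noteq> 0" using Qp_deg(2)[OF P(1)] by auto
  have G0: "Gp P \<noteq> 0" by (rule Gp_deg(3)[OF P(1)])
  have dQ: "degree (Qp P) = m" using Qp_deg(1)[OF P(1)] m by simp
  have dT: "degree (Tp P) \<le> m - 1" using Tp_deg[OF P(1)] m by simp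
  have inj: "v = 0\<^sub>v (2*m)" if v: "v \<in> carrier_vec (2*m)" "A *\<^sub>v v = 0\<^sub>v (2*m)" for v
  proof -
    define Lq where "Lq = Lv m v"
    define Tt where "Tt = Tv m v"
    define H where "H = Tt * P - Lq * pderiv P"
    have dLq: "degree Lq \<le> m - 1" unfolding Lq_def by (rule degree_le) (auto simp: coeff_Lv)
    have dTt: "degree Tt \<le> m - 1" unfolding Tt_def by (rule degree_le) (auto simp: coeff_Tv)
    have dH: "degree H \<le> n + m - 1"
    proof -
      have "degree (Tt * P) \<le> n + m - 1"
        using degree_mult_le[of Tt P] dTt m n_def by simp
      moreover have "degree (Lq * pderiv P) \<le> n + m - 1"
        using degree_mult_le[of Lq "pderiv P"] dLq m n_def degree_pderiv[of P] by simp
      ultimately show ?thesis unfolding H_def using degree_diff_le by blast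
    qed
    have cH: "coeff H t = 0" if t: "t \<ge> d" for t
    proof (cases "t < d + 2*m")
      case True
      then have r: "t - d < 2*m" using t by simp
      have "coeff H t = (A *\<^sub>v v) $ (t - d)"
        unfolding H_def Lq_def Tt_def A_def using A_apply[OF v(1) r, of P d] t by simp
      also have "\<dots> = 0" using v(2) r by simp
      finally show ?thesis .
    next
      case False
      then have "t > degree H" using dH d mn m n_def by simp
      then show ?thesis by (rule coeff_eq_0)
    qed
    define W where "W = Tt * Qp P - Lq * Tp P"
    have HW: "H = Polynomial.smult (lead_coeff P) (Gp P * W)"
      unfolding H_def W_def by (rule Hrel[OF P])
    have W0: "W = 0"
    proof (rule ccontr)
      assume "W \<noteq> 0"
      then have H0: "H \<noteq> 0" using HW a0 G0 by simp
      have "degree H = d + degree W"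
        using HW a0 G0 \<open>W \<noteq> 0\<close> dG by (simp add: degree_mult_eq)
      then have "coeff H (degree H) = 0" using cH by simp
      with H0 show False by simp
    qed
    have Lr: "poly Lq x = 0" if x: "x \<in> root_set P" for x
    proof -
      have "poly W x = 0" using W0 by simp
      then have "poly Lq x * poly (Tp P) x = 0"
        unfolding W_def using Qp_root[OF x P(1)] by simp
      then show ?thesis using Tp_root_nz[OF P(1) x] by simp
    qed
    have L0: "Lq = 0"
      by (rule few_roots_zero[OF _ fin Lr]) (use dLq m in simp)
    have T0: "Tt = 0" using W0 Q0 unfolding W_def L0 by simp
    show ?thesis
    proof (rule eq_vecI)
      fix i assume "i < dim_vec (0\<^sub>v (2*m))"
      then have i: "i < 2*m" by simp
      show "v $ i = 0\<^sub>v (2*m) $ i"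
      proof (cases "i < m")
        case True
        then show ?thesis using coeff_Lv[of m v i] L0 i unfolding Lq_def by simp
      next
        case False
        then have "i = m + (i - m)" "i - m < m" using i by auto
        then show ?thesis using coeff_Tv[of m v "i - m"] T0 i unfolding Tt_def by simp
      qed
    qed (use v in simp)
  qed
  have detA: "det A \<noteq> 0" by (rule det_nonzero_inj[OF Ac inj])
  define x where "x = vec (2*m) (\<lambda>c. if c < m then coeff (Qp P) c else coeff (Tp P) (c - m))"
  have xc: "x \<in> carrier_vec (2*m)" unfolding x_def by simp
  have Lx: "Lv m x = Qp P - monom 1 m"
  proof (rule poly_eqI)
    fix i show "coeff (Lv m x) i = coeff (Qp P - monom 1 m) i"
    proof (cases "i < m")
      case True then show ?thesis by (simp add: coeff_Lv x_def)
    next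
      case False
      then have "coeff (Qp P) i = (if i = m then 1 else 0)"
        using Qp_deg(2)[OF P(1)] m dQ by (auto simp: coeff_eq_0)
      then show ?thesis using False by (simp add: coeff_Lv)
    qed
  qed
  have Tx: "Tv m x = Tp P"
  proof (rule poly_eqI)
    fix i show "coeff (Tv m x) i = coeff (Tp P) i"
    proof (cases "i < m")
      case True then show ?thesis by (simp add: coeff_Tv x_def)
    next
      case False
      then have "coeff (Tp P) i = 0" using dT m by (intro coeff_eq_0) simp
      then show ?thesis using False by (simp add: coeff_Tv)
    qed
  qed
  have rel0: "Tp P * P - Qp P * pderiv P = 0"
    using Hrel[OF P, of "Tp P" "Qp P"] by (simp add: mult.commute)
  have Ax: "A *\<^sub>v x = b"
  proof (rule eq_vecI)
    fix r assume "r < dim_vec b"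
    then have r: "r < 2*m" using bc by simp
    have "(A *\<^sub>v x) $ r = coeff (Tp P * P - (Qp P - monom 1 m) * pderiv P) (d + r)"
      unfolding A_def using A_apply[OF xc r, of P d] Lx Tx by simp
    also have "Tp P * P - (Qp P - monom 1 m) * pderiv P = (Tp P * P - Qp P * pderiv P) + monom 1 m * pderiv P"
      by (simp add: algebra_simps)
    also have "\<dots> = monom 1 m * pderiv P" using rel0 by simp
    finally show "(A *\<^sub>v x) $ r = b $ r" using r unfolding b_def bvec_def by (simp add: coeff_monom_mult)
  qed (use Ac bc in simp)
  have cr: "x $ c = det (replace_col A b c) / det A" if c: "c < 2*m" for c
    using cramer_lemma_mat[OF Ac xc c] Ax detA by simp
  have "\<forall>c<m. coeff (Qp P) c = det (replace_col A b c) / det A"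
  proof (intro allI impI)
    fix c assume c: "c < m"
    then show "coeff (Qp P) c = det (replace_col A b c) / det A" using cr[of c] by (simp add: x_def)
  qed
  moreover have "\<forall>c<m. coeff (Tp P) c = det (replace_col A b (m + c)) / det A"
  proof (intro allI impI)
    fix c assume c: "c < m"
    then show "coeff (Tp P) c = det (replace_col A b (m + c)) / det A" using cr[of "m + c"] by (simp add: x_def)
  qed
  ultimately show ?thesis using detA unfolding A_def b_def by simp
qed


definition SS :: "nat \<Rightarrow> nat multiset \<Rightarrow> real poly set" where
  "SS n R = {P. P \<noteq> 0 \<and> degree P = n \<and> real_rooted P \<and> mult_pattern P = R}"

lemma SS_D: "P \<in> SS n R \<Longrightarrow> P \<noteq> 0 \<and> degree P = n \<and> real_rooted P \<and> card (root_set P) = size R"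
  unfolding SS_def mult_pattern_def by auto

lemma good_if: "good N S f \<Longrightarrow> good N S g \<Longrightarrow> good N S (\<lambda>P. if b then f P else g P)"
  by (cases b) simp_all

lemma good_coeffP: "good (Suc n) (SS n R) (\<lambda>P. coeff P i)"
proof (cases "i < Suc n")
  case True then show ?thesis by (rule good_coeff)
next
  case False
  show ?thesis
  proof (rule good_cong[OF good_const[of _ _ 0]])
    fix P assume "P \<in> SS n R"
    then have "degree P = n" using SS_D by blast
    then show "0 = coeff P i" using False by (simp add: coeff_eq_0)
  qed
qed

lemma good_coeffD: "good (Suc n) (SS n R) (\<lambda>P. coeff (pderiv P) i)"
  by (rule good_cong[OF good_mult[OF good_const good_coeffP]]) (simp add: coeff_pderiv)

lemma gmat_Amat: "gmat (Suc n) (SS n R) (2*m) (\<lambda>P. Amat P m d)"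
  unfolding Amat_def
  by (rule gmat_mat) (intro good_if good_minus good_coeffD good_coeffP good_const)

lemma good_bvec: "good (Suc n) (SS n R) (\<lambda>P. bvec P m d $ i)" if "i < 2*m"
  using that unfolding bvec_def by (simp, intro good_if good_coeffD good_const)


lemma sys_SS: assumes "P \<in> SS n R" "size R \<ge> 1"
  shows "det (Amat P (size R) (n - size R)) \<noteq> 0 \<and>
    (\<forall>c<size R. coeff (Qp P) c = det (replace_col (Amat P (size R) (n - size R)) (bvec P (size R) (n - size R)) c) / det (Amat P (size R) (n - size R))) \<and>
    (\<forall>c<size R. coeff (Tp P) c = det (replace_col (Amat P (size R) (n - size R)) (bvec P (size R) (n - size R)) (size R + c)) / det (Amat P (size R) (n - size R)))"
  using SS_D[OF assms(1)] by (intro system) (use assms in auto)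

lemma good_rc: assumes "c < 2 * size R"
  shows "good (Suc n) (SS n R) (\<lambda>P. det (replace_col (Amat P (size R) (n - size R)) (bvec P (size R) (n - size R)) c))"
proof -
  let ?m = "size R" and ?d = "n - size R"
  have "gmat (Suc n) (SS n R) (2 * ?m) (\<lambda>P. replace_col (Amat P ?m ?d)
      (vec (2 * ?m) ((\<lambda>P r. if ?m \<le> ?d + r then coeff (pderiv P) (?d + r - ?m) else 0) P)) c)"
    by (rule gmat_replace_col[OF gmat_Amat _ assms]) (intro good_if good_coeffD good_const)
  then show ?thesis unfolding bvec_def by (rule good_det)
qed

lemma good_Q: assumes m: "size R \<ge> 1" shows "good (Suc n) (SS n R) (\<lambda>P. coeff (Qp P) c)"
proof (cases "c < size R")
  case True
  have "good (Suc n) (SS n R) (\<lambda>P. det (replace_col (Amat P (size R) (n - size R)) (bvec P (size R) (n - size R)) c)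
      / det (Amat P (size R) (n - size R)))"
    by (rule good_divide[OF good_rc good_det[OF gmat_Amat]]) (use True sys_SS m in auto)
  then show ?thesis by (rule good_cong) (use sys_SS[OF _ m] True in auto)
next
  case False
  show ?thesis
  proof (rule good_cong[OF good_const[of _ _ "if c = size R then 1 else 0"]])
    fix P assume P: "P \<in> SS n R"
    then have "P \<noteq> 0" "card (root_set P) = size R" using SS_D by auto
    then show "(if c = size R then 1 else 0) = coeff (Qp P) c"
      using Qp_deg[of P] False by (auto simp: coeff_eq_0)
  qed
qed

lemma good_T: assumes m: "size R \<ge> 1" shows "good (Suc n) (SS n R) (\<lambda>P. coeff (Tp P) c)"
proof (cases "c < size R")
  case True
  have "good (Suc n) (SS n R) (\<lambda>P. det (replace_col (Amat P (size R) (n - size R)) (bvec P (size R) (n - size R)) (size R + c))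
      / det (Amat P (size R) (n - size R)))"
    by (rule good_divide[OF good_rc good_det[OF gmat_Amat]]) (use True sys_SS m in auto)
  then show ?thesis by (rule good_cong) (use sys_SS[OF _ m] True in auto)
next
  case False
  show ?thesis
  proof (rule good_cong[OF good_const[of _ _ 0]])
    fix P assume P: "P \<in> SS n R"
    then have "P \<noteq> 0" "card (root_set P) = size R" using SS_D by auto
    then show "0 = coeff (Tp P) c"
      using Tp_deg[of P] False m by (intro coeff_eq_0[symmetric]) auto
  qed
qed

lemma gmat_compan: assumes "\<And>c. good N S (\<lambda>P. coeff (Q P) c)" shows "gmat N S m (\<lambda>P. compan (Q P) m)"
  unfolding compan_def by (rule gmat_mat) (intro good_if good_minus good_const assms)

lemma gmat_multm: assumes "\<And>c. good N S (\<lambda>P. coeff (Q P) c)" "\<And>c. good N S (\<lambda>P. coeff (h P) c)"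
  shows "gmat N S m (\<lambda>P. multm (Q P) m (h P) K)"
  unfolding multm_def
proof (rule gmat_mat)
  fix i l assume il: "i < m" "l < m"
  show "good N S (\<lambda>P. \<Sum>e\<le>K. coeff (h P) e * (compan (Q P) m ^\<^sub>m e) $$ (i, l))"
    by (intro good_sum good_mult assms(2) gmat_entry[OF gmat_pow[OF gmat_compan[OF assms(1)]]] il) simp
qed


lemma good_Zsum: assumes m: "size R \<ge> 1" shows "good (Suc n) (SS n R) Zsum"
proof -
  let ?m = "size R" and ?S = "SS n R" and ?N = "Suc n"
  define fP where "fP P = pderiv (pderiv (Qp P))" for P
  define gP where "gP P = Polynomial.smult 2 (Tp P)" for P
  have gf: "good ?N ?S (\<lambda>P. coeff (fP P) c)" for c
  proof -
    have "good ?N ?S (\<lambda>P. (of_nat (Suc c) * of_nat (Suc (Suc c))) * coeff (Qp P) (Suc (Suc c)))"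
      by (rule good_mult[OF good_const good_Q[OF m]])
    then show ?thesis by (rule good_cong) (simp add: fP_def coeff_pderiv)
  qed
  have gg: "good ?N ?S (\<lambda>P. coeff (gP P) c)" for c
  proof -
    have "good ?N ?S (\<lambda>P. 2 * coeff (Tp P) c)"
      by (rule good_mult[OF good_const good_T[OF m]])
    then show ?thesis by (rule good_cong) (simp add: gP_def)
  qed
  define Mf where "Mf P = multm (Qp P) ?m (fP P) ?m" for P
  define Mg where "Mg P = multm (Qp P) ?m (gP P) ?m" for P
  have gMf: "gmat ?N ?S ?m Mf" unfolding Mf_def by (rule gmat_multm[OF good_Q[OF m] gf])
  have gMg: "gmat ?N ?S ?m Mg" unfolding Mg_def by (rule gmat_multm[OF good_Q[OF m] gg])
  have key: "det (Mg P) \<noteq> 0 \<and> Zsum P = mtrace (Mf P * adj_mat (Mg P)) / det (Mg P)" if PS: "P \<in> ?S" for P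
  proof -
    have P0: "P \<noteq> 0" and rr: "real_rooted P" and card: "card (root_set P) = ?m"
      using SS_D[OF PS] by auto
    have fin: "finite (root_set P)" by (rule rs_finite[OF P0])
    define xs where "xs = sorted_list_of_set (root_set P)"
    define p where "p j = xs ! j" for j
    have bij: "bij_betw p {..<?m} (root_set P)"
      unfolding p_def xs_def
      by (rule bij_betw_nth) (use fin card in \<open>auto simp: distinct_sorted_list_of_set length_sorted_list_of_set\<close>)
    have inj: "inj_on p {..<?m}" using bij by (rule bij_betw_imp_inj_on)
    have pin: "p j \<in> root_set P" if "j < ?m" for j using bij that by (auto dest: bij_betwE)
    have dQ: "degree (Qp P) = ?m" "coeff (Qp P) ?m = 1" using Qp_deg[OF P0] card by auto
    have df: "degree (fP P) \<le> ?m" unfolding fP_def by (simp add: degree_pderiv dQ)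
    have dg: "degree (gP P) \<le> ?m"
      unfolding gP_def using degree_smult_le[of 2 "Tp P"] Tp_deg[OF P0] card by simp
    have gnz: "poly (gP P) (p j) \<noteq> 0" if "j < ?m" for j
      unfolding gP_def using Tp_root_nz[OF P0 pin[OF that]] by simp
    have tf: "det (Mg P) \<noteq> 0 \<and> mtrace (Mf P * adj_mat (Mg P)) = det (Mg P) * (\<Sum>j<?m. poly (fP P) (p j) / poly (gP P) (p j))"
      unfolding Mf_def Mg_def
      by (rule trace_formula[OF m inj dQ(2) dQ(1) Qp_root[OF pin P0] df dg gnz])
    have "Zsum P = (\<Sum>x\<in>root_set P. poly (fP P) x / poly (gP P) x)"
      unfolding fP_def gP_def by (rule Zsum_eq[OF P0 rr])
    also have "\<dots> = (\<Sum>j<?m. poly (fP P) (p j) / poly (gP P) (p j))"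
      by (rule sum.reindex_bij_betw[OF bij, symmetric])
    finally show ?thesis using tf by simp
  qed
  have "good ?N ?S (\<lambda>P. mtrace (Mf P * adj_mat (Mg P)) / det (Mg P))"
    by (rule good_divide[OF good_trace[OF gmat_mult[OF gMf gmat_adj[OF gMg]]] good_det[OF gMg]]) (use key in blast)
  then show ?thesis by (rule good_cong) (use key in simp)
qed

theorem corollary3:
  fixes n :: nat and R :: "nat multiset"
  shows "\<exists>A B. poly_fun (Suc n) A \<and> poly_fun (Suc n) B \<and>
           (\<forall>P :: real poly. P \<noteq> 0 \<and> degree P = n \<and> real_rooted P \<and> mult_pattern P = R \<longrightarrow>
              B (coeff P) \<noteq> 0 \<and> Zsum P = A (coeff P) / B (coeff P))"
proof (cases "size R \<ge> 1")
  case True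
  from good_Zsum[OF True, of n] show ?thesis unfolding good_def SS_def by auto
next
  case False
  have "Zsum P = 0" if "P \<in> SS n R" for P
  proof -
    have s0: "size R = 0" using False by linarith
    have P0: "P \<noteq> 0" and c: "card (root_set P) = size R" using SS_D[OF that] by auto
    have "card (root_set P) = 0" by (simp only: c s0)
    then have "root_set P = {}" using rs_finite[OF P0] by simp
    then show ?thesis unfolding Zsum_def by simp
  qed
  then have "good (Suc n) (SS n R) Zsum" by (intro good_cong[OF good_const[of _ _ 0]]) simp
  then show ?thesis unfolding good_def SS_def by auto
qed


end
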